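(* Let $(I,J,\emptyset)$ be a reduced presentation with $J\neq\emptyset$, and let $\mathcal Q=\mathcal Q[I,J]$. If $I{\downarrow}\cap J{\downarrow}\supsetneq\{1\}$, then $\mathcal Q$ is not primitive.
   Context: $\mathbf Q(\mathcal K)=\mathbf{ISPP}_u(\mathcal K)$. $\mathbf{\L}_n$ is the Wajsberg hoop on $\{0,\dots,n\}$ with $ab=\max\{a+b-n,0\}$, $a\to b=\min\{n-a+b,n\}$; $\mathbf{\L}_{n,k}$ is the Wajsberg hoop on $\{(r,s)\in\mathbb Z^2:(0,0)\le(r,s)\le(n,k)\}$ (lexicographic order) with the analogous operations using componentwise addition and $u=(n,k)$. $X{\downarrow}$ = set of divisors of elements of $X$. A presentation $(I,J,\emptyset)$ is reduced if $I\cup J\ne\emptyset$, no $m\in I$ divides any element of $(I\setminus\{m\})\cup J$, and no $n\in J$ divides any element of $J\setminus\{n\}$. $\mathcal Q[I,J]=\mathbf Q(\{\mathbf{\L}_i:i\in I\}\cup\{\mathbf{\L}_{j,1}:j\in J\})$. A quasivariety is primitive if every subquasivariety $\mathcal Q'$ satisfies $\mathcal Q'=\mathbf H(\mathcal Q')\cap\mathcal Q$, equivalently every subquasivariety is structural (structural: for every subquasivariety $\mathcal Q''$, $\mathbf H(\mathcal Q'')=\mathbf H(\mathcal Q')$ implies $\mathcal Q''=\mathcal Q'$). *)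

theory Defs
  imports Main
begin

record 'c halg =
  hcarrier :: "'c set"
  hmul :: "'c \<Rightarrow> 'c \<Rightarrow> 'c"
  himp :: "'c \<Rightarrow> 'c \<Rightarrow> 'c"
  hone :: 'c

definition is_alg :: "('c, 'm) halg_scheme \<Rightarrow> bool" where
  "is_alg A \<longleftrightarrow> hone A \<in> hcarrier A \<and>
     (\<forall>x\<in>hcarrier A. \<forall>y\<in>hcarrier A. hmul A x y \<in> hcarrier A \<and> himp A x y \<in> hcarrier A)"

datatype trm = V nat | One | Mul trm trm | Imp trm trm

primrec eval :: "('c, 'm) halg_scheme \<Rightarrow> (nat \<Rightarrow> 'c) \<Rightarrow> trm \<Rightarrow> 'c" where
  "eval A h (V x) = h x"
| "eval A h One = hone A"
| "eval A h (Mul s t) = hmul A (eval A h s) (eval A h t)"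
| "eval A h (Imp s t) = himp A (eval A h s) (eval A h t)"

text \<open>A quasi-identity: a finite list of equations (premises) and a conclusion equation.
  Identities are quasi-identities with no premises.\<close>
type_synonym qid = "(trm \<times> trm) list \<times> (trm \<times> trm)"

definition holds :: "qid \<Rightarrow> ('c, 'm) halg_scheme \<Rightarrow> bool" where
  "holds q A \<longleftrightarrow> (\<forall>h. (\<forall>x. h x \<in> hcarrier A) \<longrightarrow>
      (\<forall>(s,t)\<in>set (fst q). eval A h s = eval A h t) \<longrightarrow>
      eval A h (fst (snd q)) = eval A h (snd (snd q)))"

type_synonym alg = "nat halg"

definition quasivariety :: "alg set \<Rightarrow> bool" where
  "quasivariety C \<longleftrightarrow> (\<exists>\<Sigma>. C = {A. is_alg A \<and> (\<forall>q\<in>\<Sigma>. holds q A)})"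

definition is_hom :: "('a, 'm) halg_scheme \<Rightarrow> ('b, 'n) halg_scheme \<Rightarrow> ('a \<Rightarrow> 'b) \<Rightarrow> bool" where
  "is_hom A B f \<longleftrightarrow> f ` hcarrier A \<subseteq> hcarrier B \<and> f (hone A) = hone B \<and>
     (\<forall>x\<in>hcarrier A. \<forall>y\<in>hcarrier A.
        f (hmul A x y) = hmul B (f x) (f y) \<and> f (himp A x y) = himp B (f x) (f y))"

definition Hcl :: "alg set \<Rightarrow> alg set" where
  "Hcl C = {B. is_alg B \<and> (\<exists>A\<in>C. \<exists>f. is_hom A B f \<and> f ` hcarrier A = hcarrier B)}"

definition primitive :: "alg set \<Rightarrow> bool" where
  "primitive Q \<longleftrightarrow> (\<forall>Q'. quasivariety Q' \<and> Q' \<subseteq> Q \<longrightarrow> Q' = Hcl Q' \<inter> Q)"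

definition Luk :: "nat \<Rightarrow> nat halg" where
  "Luk n = \<lparr> hcarrier = {0..n}, hmul = (\<lambda>a b. a + b - n),
            himp = (\<lambda>a b. min (n - a + b) n), hone = n \<rparr>"

definition lexle :: "int \<times> int \<Rightarrow> int \<times> int \<Rightarrow> bool" where
  "lexle a b \<longleftrightarrow> fst a < fst b \<or> (fst a = fst b \<and> snd a \<le> snd b)"

definition lexmax :: "int \<times> int \<Rightarrow> int \<times> int \<Rightarrow> int \<times> int" where
  "lexmax a b = (if lexle a b then b else a)"

definition lexmin :: "int \<times> int \<Rightarrow> int \<times> int \<Rightarrow> int \<times> int" where
  "lexmin a b = (if lexle a b then a else b)"

definition Luk2 :: "nat \<Rightarrow> nat \<Rightarrow> (int \<times> int) halg" where
  "Luk2 n k = \<lparr> hcarrier = {p. lexle (0,0) p \<and> lexle p (int n, int k)},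
      hmul = (\<lambda>a b. lexmax (fst a + fst b - int n, snd a + snd b - int k) (0,0)),
      himp = (\<lambda>a b. lexmin (int n - fst a + fst b, int k - snd a + snd b) (int n, int k)),
      hone = (int n, int k) \<rparr>"

text \<open>Q[I,J] = Q({L_i : i \<in> I} \<union> {L_{j,1} : j \<in> J}): all algebras satisfying every
  quasi-identity valid in all generators.\<close>
definition QIJ :: "nat set \<Rightarrow> nat set \<Rightarrow> alg set" where
  "QIJ I J = {A. is_alg A \<and> (\<forall>q. (\<forall>i\<in>I. holds q (Luk i)) \<and> (\<forall>j\<in>J. holds q (Luk2 j 1))
                                   \<longrightarrow> holds q A)}"

definition down :: "nat set \<Rightarrow> nat set" where
  "down X = {d. \<exists>x\<in>X. d dvd x}"

definition reduced :: "nat set \<Rightarrow> nat set \<Rightarrow> bool" where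
  "reduced I J \<longleftrightarrow> I \<union> J \<noteq> {} \<and>
     (\<forall>m\<in>I. \<forall>x\<in>(I - {m}) \<union> J. \<not> m dvd x) \<and>
     (\<forall>n\<in>J. \<forall>x\<in>J - {n}. \<not> n dvd x)"

end

theory Submission imports Defs "HOL-Library.Countable" begin

lemma hom_eval:
  assumes "is_alg A" "is_hom A B f" "\<forall>x. h x \<in> hcarrier A"
  shows "eval B (f \<circ> h) t = f (eval A h t) \<and> eval A h t \<in> hcarrier A"
  using assms by (induction t) (auto simp: is_alg_def is_hom_def)

lemma emb_holds:
  assumes "is_alg A" "is_hom A B f" "inj_on f (hcarrier A)" "holds q B"
  shows "holds q A"
  unfolding holds_def
proof (intro allI impI)
  fix h assume h: "\<forall>x. h x \<in> hcarrier A"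
    and pr: "\<forall>(s, t)\<in>set (fst q). eval A h s = eval A h t"
  have hB: "\<forall>x. (f \<circ> h) x \<in> hcarrier B" using h assms(2) by (auto simp: is_hom_def)
  have E: "\<And>t. eval B (f \<circ> h) t = f (eval A h t) \<and> eval A h t \<in> hcarrier A"
    using hom_eval[OF assms(1,2) h] by blast
  have "\<forall>(s, t)\<in>set (fst q). eval B (f \<circ> h) s = eval B (f \<circ> h) t"
    using pr E by auto
  then have "eval B (f \<circ> h) (fst (snd q)) = eval B (f \<circ> h) (snd (snd q))"
    using assms(4) hB unfolding holds_def by blast
  then show "eval A h (fst (snd q)) = eval A h (snd (snd q))"
    using E assms(3) by (metis inj_on_def)
qed

lemma hom_comp: "is_hom A B f \<Longrightarrow> is_hom B C g \<Longrightarrow> is_hom A C (g \<circ> f)"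
  unfolding is_hom_def by (auto simp: image_subset_iff)

lemma alg_Luk: "is_alg (Luk n)"
  by (auto simp: is_alg_def Luk_def)

lemma alg_Luk2: "is_alg (Luk2 n k)"
  by (auto simp: is_alg_def Luk2_def lexle_def lexmax_def lexmin_def)

lemma hom_Luk_emb:
  assumes "m > 0"
  shows "is_hom (Luk d) (Luk (d*m)) (\<lambda>a. a*m) \<and> inj_on (\<lambda>a. a*m) (hcarrier (Luk d))"
proof -
  have mul: "(a + b - d) * m = a*m + b*m - d*m" for a b :: nat
    by (simp add: diff_mult_distrib add_mult_distrib)
  have imp: "min (d - a + b) d * m = min (d*m - a*m + b*m) (d*m)" if "a \<le> d" for a b :: nat
  proof -
    have "(d - a + b) * m = d*m - a*m + b*m" using that
      by (simp add: diff_mult_distrib add_mult_distrib)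
    moreover have "min x y * m = min (x*m) (y*m)" for x y :: nat
      using assms by (simp add: min_def)
    ultimately show ?thesis by metis
  qed
  show ?thesis using assms mul imp
    by (auto simp: is_hom_def Luk_def inj_on_def)
qed

definition sc :: "int \<Rightarrow> int \<times> int \<Rightarrow> int \<times> int" where
  "sc m p = (fst p * m, snd p)"

lemma sc_lexle: "m > 0 \<Longrightarrow> lexle (sc m p) (sc m q) = lexle p q"
  by (auto simp: sc_def lexle_def)

lemma sc_lexmax: "m > 0 \<Longrightarrow> sc m (lexmax p q) = lexmax (sc m p) (sc m q)"
  by (simp add: lexmax_def sc_lexle)

lemma sc_lexmin: "m > 0 \<Longrightarrow> sc m (lexmin p q) = lexmin (sc m p) (sc m q)"
  by (simp add: lexmin_def sc_lexle)

lemma hom_Luk2_emb: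
  assumes "m > 0"
  shows "is_hom (Luk2 d 1) (Luk2 (d*m) 1) (sc (int m)) \<and> inj_on (sc (int m)) (hcarrier (Luk2 d 1))"
proof -
  have m: "int m > 0" using assms by simp
  have c: "lexle (0,0) (sc (int m) p) \<and> lexle (sc (int m) p) (int (d*m), 1)"
    if "lexle (0,0) p" "lexle p (int d, 1)" for p
    using sc_lexle[OF m, of "(0,0)" p] sc_lexle[OF m, of p "(int d, 1)"] that
    by (simp add: sc_def mult.commute)
  have mul: "sc (int m) (lexmax (fst a + fst b - int d, snd a + snd b - 1) (0,0))
     = lexmax (fst (sc (int m) a) + fst (sc (int m) b) - int (d*m), snd (sc (int m) a) + snd (sc (int m) b) - 1) (0,0)" for a b
    using sc_lexmax[OF m, of "(fst a + fst b - int d, snd a + snd b - 1)" "(0,0)"]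
    by (simp add: sc_def algebra_simps)
  have imp: "sc (int m) (lexmin (int d - fst a + fst b, 1 - snd a + snd b) (int d, 1))
     = lexmin (int (d*m) - fst (sc (int m) a) + fst (sc (int m) b), 1 - snd (sc (int m) a) + snd (sc (int m) b)) (int (d*m), 1)" for a b
    using sc_lexmin[OF m, of "(int d - fst a + fst b, 1 - snd a + snd b)" "(int d, 1)"]
    by (simp add: sc_def algebra_simps)
  show ?thesis
    using c mul imp m
    by (auto simp: is_hom_def Luk2_def inj_on_def sc_def)
qed

lemma hom_Luk2_proj:
  assumes "d > 0"
  shows "is_hom (Luk2 d 1) (Luk d) (\<lambda>p. nat (fst p)) \<and> (\<lambda>p. nat (fst p)) ` hcarrier (Luk2 d 1) = hcarrier (Luk d)"
proof -
  have "is_hom (Luk2 d 1) (Luk d) (\<lambda>p. nat (fst p))"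
    using assms by (auto simp: is_hom_def Luk2_def Luk_def lexle_def lexmax_def lexmin_def)
  moreover have "hcarrier (Luk d) \<subseteq> (\<lambda>p. nat (fst p)) ` hcarrier (Luk2 d 1)"
  proof
    fix a assume "a \<in> hcarrier (Luk d)"
    then have "(int a, 0) \<in> hcarrier (Luk2 d 1) \<and> a = nat (fst (int a, 0::int))"
      by (auto simp: Luk_def Luk2_def lexle_def)
    then show "a \<in> (\<lambda>p. nat (fst p)) ` hcarrier (Luk2 d 1)" by blast
  qed
  ultimately show ?thesis by (auto simp: is_hom_def)
qed

primrec pw :: "nat \<Rightarrow> trm" where
  "pw 0 = One"
| "pw (Suc k) = Mul (pw k) (V 0)"

lemma pw_Luk: "d \<ge> 1 \<Longrightarrow> eval (Luk d) (\<lambda>_. d - 1) (pw k) = d - k"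
  by (induction k) (auto simp: Luk_def)

lemma pw_Luk2:
  assumes "h 0 = (r, s)" "lexle (0,0) (r,s)" "lexle (r,s) (int d, 1)"
  shows "eval (Luk2 d 1) h (pw k) = lexmax (int k * (r - int d) + int d, int k * (s - 1) + 1) (0,0)"
proof (induction k)
  case 0
  then show ?case by (simp add: Luk2_def lexmax_def lexle_def)
next
  case (Suc k)
  have e1: "int (Suc k) * (r - int d) = int k * (r - int d) + (r - int d)" by (simp add: algebra_simps)
  have e2: "int (Suc k) * (s - 1) = int k * (s - 1) + (s - 1)" by (simp add: algebra_simps)
  show ?case using Suc assms(2,3) unfolding e1 e2
    by (simp add: Luk2_def assms(1)) (auto simp: lexmax_def lexle_def)
qed

definition q0 :: "nat \<Rightarrow> qid" where
  "q0 d = ([(pw d, pw (Suc d)), (V 0, Imp (pw (d - 1)) (pw d))], (V 0, One))"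

lemma q0_Luk: "d \<ge> 2 \<Longrightarrow> \<not> holds (q0 d) (Luk d)"
proof -
  assume d: "d \<ge> 2"
  have a: "eval (Luk d) (\<lambda>_. d - 1) (pw (d - 1)) = 1" using d pw_Luk[of d "d - 1"] by simp
  have b: "eval (Luk d) (\<lambda>_. d - 1) (pw d) = 0" using d pw_Luk[of d d] by simp
  have "eval (Luk d) (\<lambda>_. d - 1) (Imp (pw (d - 1)) (pw d)) = d - 1"
    by (simp only: eval.simps a b) (simp add: Luk_def)
  moreover have "eval (Luk d) (\<lambda>_. d - 1) (pw (Suc d)) = 0" using d pw_Luk[of d "Suc d"] by simp
  moreover have "\<forall>x. (\<lambda>_. d - 1) x \<in> hcarrier (Luk d)" by (simp add: Luk_def)
  moreover have "eval (Luk d) (\<lambda>_. d - 1) (V 0) \<noteq> eval (Luk d) (\<lambda>_. d - 1) One"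
    using d by (simp add: Luk_def)
  ultimately show ?thesis using b unfolding holds_def q0_def
    by (simp del: eval.simps(3,4) pw.simps) (metis eval.simps(1))
qed

lemma q0_Luk2: "d \<ge> 2 \<Longrightarrow> holds (q0 d) (Luk2 d 1)"
  unfolding holds_def q0_def
proof (intro allI impI)
  fix h assume d: "d \<ge> 2" and h: "\<forall>x. h x \<in> hcarrier (Luk2 d 1)"
    and pr: "\<forall>(s, t)\<in>set (fst ([(pw d, pw (Suc d)), (V 0, Imp (pw (d - 1)) (pw d))], V 0, One)).
           eval (Luk2 d 1) h s = eval (Luk2 d 1) h t"
  obtain r s where rs: "h 0 = (r, s)" by fastforce
  have c: "lexle (0,0) (r,s)" "lexle (r,s) (int d, 1)" using h rs by (auto simp: Luk2_def dest: spec[of _ 0])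
  note P = pw_Luk2[of h r s d, OF rs c]
  define D where "D = int d * (r - int d)"
  define E where "E = int d * (s - 1)"
  have e1: "int (Suc d) * (r - int d) = D + (r - int d)" by (simp add: D_def algebra_simps)
  have e2: "int (Suc d) * (s - 1) = E + (s - 1)" by (simp add: E_def algebra_simps)
  have e3: "int (d - 1) * (r - int d) = D - (r - int d)" using d by (simp add: D_def of_nat_diff algebra_simps)
  have e4: "int (d - 1) * (s - 1) = E - (s - 1)" using d by (simp add: E_def of_nat_diff algebra_simps)
  have E1: "E \<noteq> -1"
  proof
    assume "E = -1"
    then have "int d * (s - 1) = -1" by (simp add: E_def)
    then have "int d dvd 1" by (metis dvd_minus_iff dvd_triv_left)
    then show False using d by simp
  qed
  have p1: "eval (Luk2 d 1) h (pw d) = eval (Luk2 d 1) h (pw (Suc d))"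
    and p2: "h 0 = himp (Luk2 d 1) (eval (Luk2 d 1) h (pw (d - 1))) (eval (Luk2 d 1) h (pw d))"
    using pr by auto
  have "(r, s) = (int d, 1)"
    using p1 p2 E1 c d unfolding P e1 e2 e3 e4 rs D_def[symmetric] E_def[symmetric]
    by (simp add: Luk2_def) (auto simp: lexmax_def lexmin_def lexle_def split: if_splits)
  then show "eval (Luk2 d 1) h (fst (snd ([(pw d, pw (Suc d)), (V 0, Imp (pw (d - 1)) (pw d))], V 0, One))) =
       eval (Luk2 d 1) h (snd (snd ([(pw d, pw (Suc d)), (V 0, Imp (pw (d - 1)) (pw d))], V 0, One)))"
    by (simp add: rs Luk2_def)
qed

definition tr :: "(int \<times> int) halg \<Rightarrow> alg" where
  "tr L = \<lparr> hcarrier = to_nat ` hcarrier L,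
     hmul = (\<lambda>x y. to_nat (hmul L (from_nat x) (from_nat y))),
     himp = (\<lambda>x y. to_nat (himp L (from_nat x) (from_nat y))),
     hone = to_nat (hone L) \<rparr>"

lemma tr_props:
  assumes "is_alg L"
  shows "is_alg (tr L) \<and> is_hom (tr L) L from_nat \<and> inj_on (from_nat :: nat \<Rightarrow> int \<times> int) (hcarrier (tr L))
     \<and> from_nat ` hcarrier (tr L) = hcarrier L"
  using assms by (auto simp: tr_def is_alg_def is_hom_def inj_on_def image_image from_nat_to_nat)

theorem proposition4p13:
  fixes I J :: "nat set"
  assumes "finite I" and "finite J" and "0 \<notin> I \<union> J"
    and "reduced I J" and "J \<noteq> {}"
    and "{1} \<subset> down I \<inter> down J"
  shows "\<not> primitive (QIJ I J)"
proof
  assume prim: "primitive (QIJ I J)"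
  obtain d where dI: "d \<in> down I" and dJ: "d \<in> down J" and d1: "d \<noteq> 1"
    using assms(6) by blast
  obtain i where i: "i \<in> I" "d dvd i" using dI by (auto simp: down_def)
  obtain j where j: "j \<in> J" "d dvd j" using dJ by (auto simp: down_def)
  obtain m where m: "i = d * m" using i by blast
  obtain m' where m': "j = d * m'" using j by blast
  have i0: "i \<noteq> 0" "j \<noteq> 0" using assms(3) i(1) j(1) by (metis UnI1, metis UnI2)
  have d0: "d \<noteq> 0" using i0 m by auto
  have d2: "d \<ge> 2" using d0 d1 by linarith
  have mp: "m > 0" using i0 m by (cases m) auto
  have mp': "m' > 0" using i0 m' by (cases m') auto
  define L where "L = Luk2 d 1"
  define Q' :: "alg set" where "Q' = {A. is_alg A \<and> (\<forall>q\<in>{q. holds q L}. holds q A)}"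
  have qv: "quasivariety Q'" unfolding quasivariety_def Q'_def by blast
  have emb2: "holds q L" if "holds q (Luk2 j 1)" for q
    using emb_holds[OF alg_Luk2 conjunct1[OF hom_Luk2_emb[OF mp']] conjunct2[OF hom_Luk2_emb[OF mp']]]
      that unfolding L_def m' by blast
  have sub: "Q' \<subseteq> QIJ I J"
  proof
    fix A assume "A \<in> Q'"
    then show "A \<in> QIJ I J" unfolding Q'_def QIJ_def using emb2 j(1) by blast
  qed
  have LQ: "Luk d \<in> QIJ I J"
    unfolding QIJ_def using alg_Luk i(1)
      emb_holds[OF alg_Luk conjunct1[OF hom_Luk_emb[OF mp]] conjunct2[OF hom_Luk_emb[OF mp]]]
    unfolding m by blast
  have LnQ': "Luk d \<notin> Q'"
    unfolding Q'_def L_def using q0_Luk[OF d2] q0_Luk2[OF d2] by blast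
  have T: "is_alg (tr L) \<and> is_hom (tr L) L from_nat \<and> inj_on (from_nat :: nat \<Rightarrow> int \<times> int) (hcarrier (tr L))
     \<and> from_nat ` hcarrier (tr L) = hcarrier L"
    using tr_props[OF alg_Luk2] unfolding L_def .
  have trQ: "tr L \<in> Q'"
    unfolding Q'_def using T emb_holds[of "tr L" L from_nat] by blast
  have pr: "is_hom L (Luk d) (\<lambda>p. nat (fst p)) \<and> (\<lambda>p. nat (fst p)) ` hcarrier L = hcarrier (Luk d)"
    using hom_Luk2_proj[of d] d2 unfolding L_def by simp
  have "is_hom (tr L) (Luk d) ((\<lambda>p. nat (fst p)) \<circ> (from_nat :: nat \<Rightarrow> int \<times> int)) \<and>
     ((\<lambda>p. nat (fst p)) \<circ> (from_nat :: nat \<Rightarrow> int \<times> int)) ` hcarrier (tr L) = hcarrier (Luk d)"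
  proof
    show "is_hom (tr L) (Luk d) ((\<lambda>p. nat (fst p)) \<circ> (from_nat :: nat \<Rightarrow> int \<times> int))"
      using hom_comp[of "tr L" L from_nat "Luk d"] T pr by blast
    have "((\<lambda>p. nat (fst p)) \<circ> (from_nat :: nat \<Rightarrow> int \<times> int)) ` hcarrier (tr L) = (\<lambda>p. nat (fst p)) ` ((from_nat :: nat \<Rightarrow> int \<times> int) ` hcarrier (tr L))"
      by (simp add: image_comp)
    then show "((\<lambda>p. nat (fst p)) \<circ> (from_nat :: nat \<Rightarrow> int \<times> int)) ` hcarrier (tr L) = hcarrier (Luk d)"
      using T pr by simp
  qed
  then have "Luk d \<in> Hcl Q'" unfolding Hcl_def using trQ alg_Luk by blast
  then have "Luk d \<in> Q'" using prim qv sub LQ unfolding primitive_def by blast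
  then show False using LnQ' by blast
qed

end
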